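(* Consider an $M/M/1$ queue with arrival rate $\lambda>0$ and service rate $\mu>0$ with current queue length $x_k\ge1$. Let $\tau^A\sim\mathrm{Exp}(\lambda)$ and $w\sim\mathrm{Exp}(1)$ be independent, and for $\beta>0$ define the single-sample PATHWISE estimator $$G_\beta:=\frac{\partial}{\partial\mu}\,\frac{e^{-\beta\tau^A}-e^{-\beta w/\mu}}{e^{-\beta\tau^A}+e^{-\beta w/\mu}}$$ of the target $\nabla_\mu\mathbb E[x_{k+1}-x_k]=\nabla_\mu\frac{\lambda-\mu}{\lambda+\mu}=-\frac{2\lambda}{(\lambda+\mu)^2}$, where $x_{k+1}-x_k=\mathbf 1\{\tau^A<w/\mu\}-\mathbf 1\{\tau^A>w/\mu\}$. Let $G_{\beta,1},\dots,G_{\beta,B}$ be i.i.d. copies of $G_\beta$ and consider the estimator $\frac1B\sum_{i=1}^B G_{\beta,i}$. Then the choice of $\beta$ minimizing the mean-squared error of this estimator (with respect to the target) is $\beta^*=O(B^{1/5})$, and the resulting mean-squared error satisfies $\mathrm{MSE}(\beta^* )=O(B^{-4/5})$.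
   Context: The derivative in $G_\beta$ is taken with respect to $\mu$ holding $\tau^A$ and $w$ fixed. The asymptotics are as $B\to\infty$. *)

theory Defs
  imports "HOL-Probability.Probability" "HOL-Library.Landau_Symbols"
begin

definition G :: "real \<Rightarrow> real \<Rightarrow> real \<times> real \<Rightarrow> real" where
  "G beta mu tw = deriv (\<lambda>m. (exp (- beta * fst tw) - exp (- beta * snd tw / m)) /
                              (exp (- beta * fst tw) + exp (- beta * snd tw / m))) mu"

definition sample_law :: "real \<Rightarrow> (real \<times> real) measure" where
  "sample_law lam = density lborel (exponential_density lam) \<Otimes>\<^sub>M density lborel (exponential_density 1)"

definition target :: "real \<Rightarrow> real \<Rightarrow> real" where
  "target lam mu = - 2 * lam / (lam + mu)\<^sup>2"

definition MSE :: "real \<Rightarrow> real \<Rightarrow> real \<Rightarrow> nat \<Rightarrow> real" where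
  "MSE lam mu beta B = (\<integral>\<omega>. ((\<Sum>i<B. G beta mu (\<omega> i)) / real B - target lam mu)\<^sup>2
                          \<partial>(PiM {..<B} (\<lambda>_. sample_law lam)))"

end

theory Submission
  imports Defs
begin

definition psi :: "real \<Rightarrow> real" where "psi s = exp s / (1 + exp s)\<^sup>2"

lemma one_plus_exp_pos[simp]: "0 < 1 + exp (x::real)"
  using exp_gt_zero[of x] by linarith

lemma one_plus_exp_ne[simp]: "1 + exp (x::real) \<noteq> 0"
  using one_plus_exp_pos[of x] by linarith

lemma psi_measurable[measurable]: "psi \<in> borel_measurable borel"
  unfolding psi_def by measurable

lemma psi_pos: "psi s > 0" unfolding psi_def by (simp add: add_pos_pos)

lemma psi_sym: "psi (- s) = psi s"
proof -
  have "exp (-s) / (1 + exp (-s))\<^sup>2 = exp s / (1 + exp s)\<^sup>2"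
    by (simp add: exp_minus field_simps power2_eq_square add_pos_pos)
  thus ?thesis unfolding psi_def .
qed

lemma psi_le_exp_nonneg: "s \<ge> 0 \<Longrightarrow> psi s \<le> exp (- s)"
proof -
  assume "s \<ge> 0"
  have "exp s * exp s \<le> (1 + exp s)\<^sup>2" by (simp add: power2_eq_square algebra_simps)
  hence "exp s / (1 + exp s)\<^sup>2 \<le> exp s / (exp s * exp s)"
    by (intro divide_left_mono) auto
  thus ?thesis unfolding psi_def by (simp add: exp_minus field_simps)
qed

lemma psi_le_exp: "psi s \<le> exp (- \<bar>s\<bar>)"
  using psi_le_exp_nonneg[of "\<bar>s\<bar>"] psi_sym[of s] by (cases "s \<ge> 0") auto

lemma psi_ge_exp_nonneg: "s \<ge> 0 \<Longrightarrow> exp (- s) / 4 \<le> psi s"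
proof -
  assume s: "s \<ge> 0"
  have "1 \<le> exp s" using s by simp
  hence "exp s \<le> exp s * exp s" using mult_right_mono[of 1 "exp s" "exp s"] by auto
  hence "1 + exp s * 2 \<le> exp s * (exp s * 3)" using \<open>1 \<le> exp s\<close> by linarith
  hence "(1 + exp s)\<^sup>2 \<le> 4 * (exp s * exp s)" by (simp add: power2_eq_square algebra_simps)
  hence "exp s / (4 * (exp s * exp s)) \<le> exp s / (1 + exp s)\<^sup>2"
    by (intro divide_left_mono) (auto simp: add_pos_pos)
  thus ?thesis unfolding psi_def by (simp add: exp_minus field_simps)
qed

lemma psi_ge_exp: "exp (- \<bar>s\<bar>) / 4 \<le> psi s"
  using psi_ge_exp_nonneg[of "\<bar>s\<bar>"] psi_sym[of s] by (cases "s \<ge> 0") auto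

lemma psi_le_quarter: "psi s \<le> 1 / 4"
proof -
  have "4 * exp s \<le> (1 + exp s)\<^sup>2"
    using sum_squares_bound[of 1 "exp s"] by (simp add: power2_eq_square algebra_simps)
  moreover have "0 < (1 + exp s)\<^sup>2" by simp
  ultimately show ?thesis unfolding psi_def by (simp add: field_simps)
qed

lemma integrable_abs_pow_exp:
  "integrable lborel (\<lambda>s::real. \<bar>s\<bar> ^ n * exp (- \<bar>s\<bar> / 2))"
proof -
  let ?g = "\<lambda>s::real. erlang_density 0 (1/2) s * s ^ n"
  have ig: "integrable lborel ?g"
  proof (rule integrableI_nonneg)
    show "AE x in lborel. 0 \<le> ?g x" by (auto simp: erlang_density_def)
    show "(\<integral>\<^sup>+ x. ennreal (?g x) \<partial>lborel) < \<infinity>"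
      using nn_integral_erlang_ith_moment[of "1/2" 0 n] by simp
  qed simp
  have ig2: "integrable lborel (\<lambda>s. ?g (0 + (-1) * s))"
    by (rule lborel_integrable_real_affine[OF ig]) simp
  have "integrable lborel (\<lambda>s. 2 * (?g s + ?g (0 + (-1) * s)))"
    using ig ig2 by auto
  thus ?thesis
  proof (rule Bochner_Integration.integrable_bound)
    show "AE x in lborel. norm (\<bar>x\<bar> ^ n * exp (- \<bar>x\<bar> / 2)) \<le> norm (2 * (?g x + ?g (0 + (-1) * x)))"
    proof (rule AE_I2)
      fix x :: real
      show "norm (\<bar>x\<bar> ^ n * exp (- \<bar>x\<bar> / 2)) \<le> norm (2 * (?g x + ?g (0 + (-1) * x)))"
        by (cases "x < 0"; cases "x = 0") (auto simp: erlang_density_def power_minus_even power_abs)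
    qed
  qed simp
qed

lemma integrable_pow_psi:
  "integrable lborel (\<lambda>s. \<bar>s\<bar> ^ n * psi s)"
  by (rule Bochner_Integration.integrable_bound[OF integrable_abs_pow_exp[of n]])
     (auto intro!: AE_I2 mult_left_mono order.trans[OF psi_le_exp] simp: abs_mult psi_pos less_imp_le)

lemma integrable_psi: "integrable lborel psi"
  using integrable_pow_psi[of 0] by simp

lemma integrable_s_psi: "integrable lborel (\<lambda>s. s * psi s)"
  by (rule Bochner_Integration.integrable_bound[OF integrable_pow_psi[of 1]]) (auto simp: abs_mult)

lemma integrable_s2_psi: "integrable lborel (\<lambda>s. s\<^sup>2 * psi s)"
  by (rule Bochner_Integration.integrable_bound[OF integrable_pow_psi[of 2]]) (auto simp: abs_mult)

lemma integral_s_psi: "(\<integral>s. s * psi s \<partial>lborel) = 0"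
proof -
  have "(\<integral>s. s * psi s \<partial>lborel) = \<bar>-1\<bar> *\<^sub>R (\<integral>s. (0 + (-1) * s) * psi (0 + (-1) * s) \<partial>lborel)"
    by (rule lborel_integral_real_affine) simp
  also have "\<dots> = - (\<integral>s. s * psi s \<partial>lborel)" by (simp add: psi_sym)
  finally show ?thesis by simp
qed

lemma integral_psi: "(\<integral>s. psi s \<partial>lborel) = 1"
proof -
  let ?F = "\<lambda>s::real. exp s / (1 + exp s)"
  have D: "(?F has_real_derivative psi x) (at x)" for x
    unfolding psi_def
    by (auto intro!: derivative_eq_intros simp: power2_eq_square field_simps add_pos_pos)
  have A: "((?F \<circ> real_of_ereal) \<longlongrightarrow> 0) (at_right (-\<infinity>))"
    unfolding ereal_tendsto_simps
    by (rule tendsto_eq_intros exp_at_bot | simp)+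
  have eqF: "?F = (\<lambda>s. 1 / (1 + exp (- s)))"
    by (auto simp: fun_eq_iff exp_minus field_simps add_pos_pos)
  have e0: "((\<lambda>s::real. exp (- s)) \<longlongrightarrow> 0) at_top"
    by (auto intro!: exp_at_bot[THEN filterlim_compose] simp: filterlim_uminus_at_bot filterlim_ident)
  have B: "((?F \<circ> real_of_ereal) \<longlongrightarrow> 1) (at_left \<infinity>)"
    unfolding ereal_tendsto_simps eqF
    using tendsto_divide[OF tendsto_const[of 1] tendsto_add[OF tendsto_const[of 1] e0]] by simp
  have C: "isCont psi x" for x unfolding psi_def by (auto intro!: continuous_intros)
  have "(LBINT x=-\<infinity>..\<infinity>. psi x) = 1 - 0"
    by (rule interval_integral_FTC_nonneg[OF _ _ _ _ A B])
       (auto intro!: less_imp_le[OF psi_pos] simp: D C)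
  thus ?thesis
    by (simp add: interval_lebesgue_integral_def set_lebesgue_integral_def)
qed

lemma exp_moment:
  assumes k: "k > 0"
  shows "integrable lborel (\<lambda>w. exponential_density k w * w ^ n)"
    and "(\<integral>w. exponential_density k w * w ^ n \<partial>lborel) = fact n / k ^ n"
proof -
  have nn: "AE x in lborel. 0 \<le> exponential_density k x * x ^ n"
    using k by (auto intro!: AE_I2 simp: erlang_density_def)
  have N: "(\<integral>\<^sup>+ x. ennreal (exponential_density k x * x ^ n) \<partial>lborel) = ennreal (fact n / k ^ n)"
    using nn_integral_erlang_ith_moment[OF k, of 0 n] by simp
  show i: "integrable lborel (\<lambda>w. exponential_density k w * w ^ n)"
    by (rule integrableI_nonneg) (use nn N in auto)
  show "(\<integral>w. exponential_density k w * w ^ n \<partial>lborel) = fact n / k ^ n"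
    using integral_eq_nn_integral[OF _ nn] N k by simp
qed

lemma sl_pair: "lam > 0 \<Longrightarrow> pair_sigma_finite (density lborel (exponential_density lam)) (density lborel (exponential_density 1))"
  by (simp add: pair_sigma_finite_def prob_space_exponential_density prob_space_imp_sigma_finite)

lemma sl_prob: "lam > 0 \<Longrightarrow> prob_space (sample_law lam)"
  unfolding sample_law_def
  by (intro prob_space_pair prob_space_exponential_density) auto

lemma sets_sl: "sets (sample_law lam) = sets (borel \<Otimes>\<^sub>M borel)"
  unfolding sample_law_def by (intro sets_pair_measure_cong) auto

lemma integrable_sl:
  assumes lam: "lam > 0" and F[measurable]: "F \<in> borel_measurable (borel \<Otimes>\<^sub>M borel)"
    and bd: "\<And>t w. \<bar>F (t, w)\<bar> \<le> C * (1 + w\<^sup>2)"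
  shows "integrable (sample_law lam) F"
proof -
  interpret P: pair_sigma_finite "density lborel (exponential_density lam)" "density lborel (exponential_density 1)"
    using sl_pair[OF lam] .
  interpret M1: prob_space "density lborel (exponential_density lam)"
    using prob_space_exponential_density[OF lam] .
  let ?H = "\<lambda>x::real\<times>real. 1 + (snd x)\<^sup>2"
  have Hm: "?H \<in> borel_measurable (sample_law lam)"
    by (simp add: measurable_cong_sets[OF sets_sl refl])
  have "(\<integral>\<^sup>+ x. ennreal (?H x) \<partial>sample_law lam) =
      (\<integral>\<^sup>+ y. (\<integral>\<^sup>+ x. ennreal (1 + y\<^sup>2) \<partial>density lborel (exponential_density lam)) \<partial>density lborel (exponential_density 1))"
    unfolding sample_law_def by (subst P.nn_integral_snd[symmetric]) auto
  also have "\<dots> = (\<integral>\<^sup>+ y. ennreal (1 + y\<^sup>2) \<partial>density lborel (exponential_density 1))"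
    using M1.emeasure_space_1 by simp
  also have "\<dots> = (\<integral>\<^sup>+ y. ennreal (exponential_density 1 y * y ^ 0 + exponential_density 1 y * y ^ 2) \<partial>lborel)"
    by (subst nn_integral_density) (auto intro!: nn_integral_cong simp: ennreal_mult[symmetric] algebra_simps erlang_density_def)
  also have "\<dots> = ennreal (fact 0 / 1 ^ 0 + fact 2 / 1 ^ 2)"
  proof -
    have i: "integrable lborel (\<lambda>y. exponential_density 1 y * y ^ 0 + exponential_density 1 y * y ^ 2)"
      using exp_moment(1)[of 1 0] exp_moment(1)[of 1 2] by auto
    have "(\<integral>y. exponential_density 1 y * y ^ 0 + exponential_density 1 y * y ^ 2 \<partial>lborel) = fact 0 / 1 ^ 0 + fact 2 / 1 ^ 2"
      using exp_moment[of 1 0] exp_moment[of 1 2] by (subst Bochner_Integration.integral_add) auto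
    thus ?thesis
      by (subst nn_integral_eq_integral[OF i]) (auto simp: erlang_density_def)
  qed
  finally have "(\<integral>\<^sup>+ x. ennreal (?H x) \<partial>sample_law lam) < \<infinity>" by simp
  hence iH: "integrable (sample_law lam) (\<lambda>x. C * ?H x)"
    by (intro integrable_mult_right integrableI_nonneg Hm) auto
  show ?thesis
    by (rule Bochner_Integration.integrable_bound[OF iH])
       (auto simp: measurable_cong_sets[OF sets_sl refl] intro!: AE_I2 order.trans[OF bd])
qed

lemma integral_sl:
  assumes lam: "lam > 0" and F[measurable]: "F \<in> borel_measurable (borel \<Otimes>\<^sub>M borel)"
    and iF: "integrable (sample_law lam) F"
  shows "integral\<^sup>L (sample_law lam) F =
    (\<integral>w. exponential_density 1 w * (\<integral>t. exponential_density lam t * F (t, w) \<partial>lborel) \<partial>lborel)"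
proof -
  interpret P: pair_sigma_finite "density lborel (exponential_density lam)" "density lborel (exponential_density 1)"
    using sl_pair[OF lam] .
  have eq: "(\<lambda>(x, y). F (x, y)) = F" by auto
  have "integral\<^sup>L (sample_law lam) F = (\<integral>y. (\<integral>x. F (x, y) \<partial>density lborel (exponential_density lam)) \<partial>density lborel (exponential_density 1))"
    using P.integral_snd[of "\<lambda>x y. F (x, y)"] iF unfolding sample_law_def eq by simp
  also have "\<dots> = (\<integral>y. exponential_density 1 y * (\<integral>x. F (x, y) \<partial>density lborel (exponential_density lam)) \<partial>lborel)"
  proof (subst integral_density)
    show "(\<lambda>y. \<integral>x. F (x, y) \<partial>density lborel (exponential_density lam)) \<in> borel_measurable lborel"
    proof -
      have "(\<lambda>y. \<integral>x. F (x, y) \<partial>density lborel (exponential_density lam)) \<in> borel_measurable borel"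
        by (rule P.M1.borel_measurable_lebesgue_integral) (simp add: measurable_split_conv)
      thus ?thesis by simp
    qed
  qed (auto simp: erlang_density_def)
  also have "\<dots> = (\<integral>w. exponential_density 1 w * (\<integral>t. exponential_density lam t * F (t, w) \<partial>lborel) \<partial>lborel)"
  proof -
    have "(\<integral>x. F (x, y) \<partial>density lborel (exponential_density lam)) = (\<integral>t. exponential_density lam t * F (t, y) \<partial>lborel)" for y
      using lam by (subst integral_density) (auto intro!: AE_I2 simp: erlang_density_def)
    thus ?thesis by simp
  qed
  finally show ?thesis .
qed

lemma G_closed:
  assumes mu: "mu > 0"
  shows "G beta mu (t, w) = - 2 * beta * w * psi (beta * (t - w / mu)) / mu\<^sup>2"
proof -
  define A where "A = exp (- beta * t)"
  define E where "E = exp (- beta * w / mu)"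
  have Ap: "A > 0" "E > 0" by (auto simp: A_def E_def)
  let ?f = "\<lambda>m. (A - exp (- beta * w / m)) / (A + exp (- beta * w / m))"
  have d1: "((\<lambda>m. exp (- beta * w / m)) has_real_derivative E * (beta * w / mu\<^sup>2)) (at mu)"
    unfolding E_def using mu
    by (auto intro!: derivative_eq_intros simp: power2_eq_square field_simps)
  have d: "(?f has_real_derivative
     ((- (E * (beta * w / mu\<^sup>2))) * (A + E) - (A - E) * (E * (beta * w / mu\<^sup>2))) / ((A + E) * (A + E))) (at mu)"
  proof -
    have n: "((\<lambda>m. A - exp (- beta * w / m)) has_real_derivative - (E * (beta * w / mu\<^sup>2))) (at mu)"
      using DERIV_diff[OF DERIV_const[of A "at mu"] d1] by simp
    have dd: "((\<lambda>m. A + exp (- beta * w / m)) has_real_derivative (E * (beta * w / mu\<^sup>2))) (at mu)"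
      using DERIV_add[OF DERIV_const[of A "at mu"] d1] by simp
    have "A + E \<noteq> 0" using Ap by simp
    from DERIV_divide[OF n dd, unfolded E_def[symmetric], OF this] show ?thesis by simp
  qed
  hence "G beta mu (t, w) = ((- (E * (beta * w / mu\<^sup>2))) * (A + E) - (A - E) * (E * (beta * w / mu\<^sup>2))) / ((A + E) * (A + E))"
    unfolding G_def A_def by (simp add: DERIV_imp_deriv)
  also have "\<dots> = - 2 * beta * w * (A * E / (A + E)\<^sup>2) / mu\<^sup>2"
  proof -
    have "(A + E) \<noteq> 0" "mu \<noteq> 0" using Ap mu by auto
    thus ?thesis by (simp add: field_simps power2_eq_square)
  qed
  also have "A * E / (A + E)\<^sup>2 = psi (beta * (t - w / mu))"
  proof -
    have "exp (beta * (t - w / mu)) = E / A" unfolding A_def E_def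
      by (simp add: exp_diff[symmetric] algebra_simps diff_divide_distrib)
    hence "psi (beta * (t - w / mu)) = (E / A) / (1 + E / A)\<^sup>2" unfolding psi_def by simp
    also have "\<dots> = A * E / (A + E)\<^sup>2" using Ap by (simp add: field_simps power2_eq_square)
    finally show ?thesis by simp
  qed
  finally show ?thesis .
qed

definition Ip :: "real \<Rightarrow> real \<Rightarrow> real \<Rightarrow> real \<Rightarrow> nat \<Rightarrow> real" where
  "Ip lam mu beta w n = (\<integral>t. exponential_density lam t * psi (beta * (t - w / mu)) ^ n \<partial>lborel)"

lemma G_fun: "mu > 0 \<Longrightarrow> G beta mu = (\<lambda>x. - 2 * beta * snd x * psi (beta * (fst x - snd x / mu)) / mu\<^sup>2)"
  using G_closed by (auto simp: fun_eq_iff)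

lemma psi_nonneg: "0 \<le> psi s" using psi_pos[of s] by simp

lemma mean_G:
  assumes lam: "lam > 0" and mu: "mu > 0" and beta: "beta > 0"
  shows "integrable (sample_law lam) (G beta mu)"
    and "integral\<^sup>L (sample_law lam) (G beta mu) =
       - 2 * beta / mu\<^sup>2 * (\<integral>w. exponential_density 1 w * w * Ip lam mu beta w 1 \<partial>lborel)"
proof -
  show i: "integrable (sample_law lam) (G beta mu)"
    unfolding G_fun[OF mu]
  proof (rule integrable_sl[OF lam, where C="beta / (2 * mu\<^sup>2)"])
    fix t w :: real
    have "\<bar>- 2 * beta * w * psi (beta * (t - w / mu)) / mu\<^sup>2\<bar> = 2 * beta * \<bar>w\<bar> * psi (beta * (t - w / mu)) / mu\<^sup>2"
      using beta psi_nonneg by (simp add: abs_mult)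
    also have "\<dots> \<le> 2 * beta * \<bar>w\<bar> * (1/4) / mu\<^sup>2"
      using beta mu psi_le_quarter by (intro divide_right_mono mult_left_mono) auto
    also have "\<dots> \<le> beta / (2 * mu\<^sup>2) * (1 + w\<^sup>2)"
    proof -
      have "0 \<le> (\<bar>w\<bar> - 1)\<^sup>2" by simp
      hence "\<bar>w\<bar> \<le> 1 + w\<^sup>2" by (simp add: power2_eq_square algebra_simps abs_mult_self_eq)
      hence "beta * \<bar>w\<bar> \<le> beta + beta * w\<^sup>2" using mult_left_mono[of "\<bar>w\<bar>" "1 + w\<^sup>2" beta] beta by (simp add: distrib_left)
      thus ?thesis using beta mu by (simp add: field_simps)
    qed
    finally show "\<bar>(- 2 * beta * snd (t, w) * psi (beta * (fst (t, w) - snd (t, w) / mu)) / mu\<^sup>2)\<bar> \<le> beta / (2 * mu\<^sup>2) * (1 + w\<^sup>2)" by simp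
  qed measurable
  have "integral\<^sup>L (sample_law lam) (G beta mu) =
     (\<integral>w. exponential_density 1 w * (\<integral>t. exponential_density lam t * (- 2 * beta * w * psi (beta * (t - w / mu)) / mu\<^sup>2) \<partial>lborel) \<partial>lborel)"
    using integral_sl[OF lam _ i] unfolding G_fun[OF mu] by simp
  also have "\<dots> = (\<integral>w. - 2 * beta / mu\<^sup>2 * (exponential_density 1 w * w * Ip lam mu beta w 1) \<partial>lborel)"
  proof -
    have "(\<integral>t. exponential_density lam t * (- 2 * beta * w * psi (beta * (t - w / mu)) / mu\<^sup>2) \<partial>lborel)
      = (- 2 * beta * w / mu\<^sup>2) * Ip lam mu beta w 1" for w
      unfolding Ip_def by (subst integral_mult_right_zero[symmetric]) (simp add: field_simps)
    note H = this
    show ?thesis using mu by (intro Bochner_Integration.integral_cong refl) (subst H, simp add: field_simps)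
  qed
  also have "\<dots> = - 2 * beta / mu\<^sup>2 * (\<integral>w. exponential_density 1 w * w * Ip lam mu beta w 1 \<partial>lborel)"
    by (rule integral_mult_right_zero)
  finally show "integral\<^sup>L (sample_law lam) (G beta mu) =
       - 2 * beta / mu\<^sup>2 * (\<integral>w. exponential_density 1 w * w * Ip lam mu beta w 1 \<partial>lborel)" .
qed

lemma second_G:
  assumes lam: "lam > 0" and mu: "mu > 0" and beta: "beta > 0"
  shows "integrable (sample_law lam) (\<lambda>x. (G beta mu x)\<^sup>2)"
    and "integral\<^sup>L (sample_law lam) (\<lambda>x. (G beta mu x)\<^sup>2) =
       4 * beta\<^sup>2 / mu ^ 4 * (\<integral>w. exponential_density 1 w * w\<^sup>2 * Ip lam mu beta w 2 \<partial>lborel)"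
proof -
  have eq: "(\<lambda>x. (G beta mu x)\<^sup>2) = (\<lambda>x. 4 * beta\<^sup>2 * (snd x)\<^sup>2 * psi (beta * (fst x - snd x / mu)) ^ 2 / mu ^ 4)"
    unfolding G_fun[OF mu] by (auto simp: fun_eq_iff power_divide power_mult_distrib simp flip: power_mult)
  show i: "integrable (sample_law lam) (\<lambda>x. (G beta mu x)\<^sup>2)"
    unfolding eq
  proof (rule integrable_sl[OF lam, where C="beta\<^sup>2 / (4 * mu ^ 4)"])
    fix t w :: real
    have p: "psi (beta * (t - w / mu)) ^ 2 \<le> (1/4)^2"
      using psi_le_quarter psi_nonneg by (intro power_mono) auto
    have "\<bar>4 * beta\<^sup>2 * w\<^sup>2 * psi (beta * (t - w / mu)) ^ 2 / mu ^ 4\<bar> = 4 * beta\<^sup>2 * w\<^sup>2 * psi (beta * (t - w / mu)) ^ 2 / mu ^ 4"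
      by simp
    also have "\<dots> \<le> 4 * beta\<^sup>2 * w\<^sup>2 * (1/4)^2 / mu ^ 4"
      using mu p by (intro divide_right_mono mult_left_mono) auto
    also have "\<dots> \<le> beta\<^sup>2 / (4 * mu ^ 4) * (1 + w\<^sup>2)"
      using mu by (simp add: field_simps)
    finally show "\<bar>4 * beta\<^sup>2 * (snd (t, w))\<^sup>2 * psi (beta * (fst (t, w) - snd (t, w) / mu)) ^ 2 / mu ^ 4\<bar> \<le> beta\<^sup>2 / (4 * mu ^ 4) * (1 + w\<^sup>2)" by simp
  qed measurable
  have "integral\<^sup>L (sample_law lam) (\<lambda>x. (G beta mu x)\<^sup>2) =
     (\<integral>w. exponential_density 1 w * (\<integral>t. exponential_density lam t * (4 * beta\<^sup>2 * w\<^sup>2 * psi (beta * (t - w / mu)) ^ 2 / mu ^ 4) \<partial>lborel) \<partial>lborel)"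
    using integral_sl[OF lam _ i[unfolded eq]] unfolding eq by simp
  also have "\<dots> = (\<integral>w. 4 * beta\<^sup>2 / mu ^ 4 * (exponential_density 1 w * w\<^sup>2 * Ip lam mu beta w 2) \<partial>lborel)"
  proof -
    have "(\<integral>t. exponential_density lam t * (4 * beta\<^sup>2 * w\<^sup>2 * psi (beta * (t - w / mu)) ^ 2 / mu ^ 4) \<partial>lborel)
      = (4 * beta\<^sup>2 * w\<^sup>2 / mu ^ 4) * Ip lam mu beta w 2" for w
      unfolding Ip_def by (subst integral_mult_right_zero[symmetric]) (simp add: field_simps)
    note H = this
    show ?thesis using mu by (intro Bochner_Integration.integral_cong refl) (subst H, simp add: field_simps)
  qed
  also have "\<dots> = 4 * beta\<^sup>2 / mu ^ 4 * (\<integral>w. exponential_density 1 w * w\<^sup>2 * Ip lam mu beta w 2 \<partial>lborel)"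
    by (rule integral_mult_right_zero)
  finally show "integral\<^sup>L (sample_law lam) (\<lambda>x. (G beta mu x)\<^sup>2) =
       4 * beta\<^sup>2 / mu ^ 4 * (\<integral>w. exponential_density 1 w * w\<^sup>2 * Ip lam mu beta w 2 \<partial>lborel)" .
qed

lemma Ip_measurable[measurable]: "(\<lambda>w. Ip lam mu beta w n) \<in> borel_measurable borel"
  unfolding Ip_def by measurable

lemma ed_le: "lam > 0 \<Longrightarrow> exponential_density lam x \<le> lam"
  by (auto simp: exponential_density_def)

lemma ed_nonneg: "lam > 0 \<Longrightarrow> 0 \<le> exponential_density lam x"
  by (auto simp: exponential_density_def)

lemma Ip1_subst:
  assumes beta: "beta > 0"
  shows "beta * Ip lam mu beta w 1 = (\<integral>s. exponential_density lam (w / mu + s / beta) * psi s \<partial>lborel)"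
proof -
  have "Ip lam mu beta w 1 = \<bar>1 / beta\<bar> *\<^sub>R (\<integral>s. exponential_density lam (w / mu + 1 / beta * s) * psi (beta * ((w / mu + 1 / beta * s) - w / mu)) ^ 1 \<partial>lborel)"
    unfolding Ip_def by (rule lborel_integral_real_affine) (use beta in simp)
  also have "\<dots> = (1 / beta) * (\<integral>s. exponential_density lam (w / mu + s / beta) * psi s \<partial>lborel)"
    using beta by simp
  finally show ?thesis using beta by simp
qed

lemma integrable_ed_psi:
  assumes lam: "lam > 0"
  shows "integrable lborel (\<lambda>s. exponential_density lam (a + s / beta) * psi s)"
  by (rule Bochner_Integration.integrable_bound[OF integrable_mult_left[OF integrable_psi, of lam]])
     (use lam ed_nonneg[OF lam] psi_nonneg mult_right_mono[OF ed_le[OF lam] psi_nonneg] in \<open>auto intro!: AE_I2 simp: mult.commute\<close>)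

lemma Ip_nonneg: "lam > 0 \<Longrightarrow> 0 \<le> Ip lam mu beta w n"
  unfolding Ip_def by (intro integral_nonneg_AE AE_I2) (auto intro!: mult_nonneg_nonneg ed_nonneg zero_le_power psi_nonneg)

lemma Ip1_le:
  assumes lam: "lam > 0" and beta: "beta > 0"
  shows "Ip lam mu beta w 1 \<le> lam / beta"
proof -
  have "beta * Ip lam mu beta w 1 \<le> (\<integral>s. lam * psi s \<partial>lborel)"
    unfolding Ip1_subst[OF beta]
    by (rule integral_mono'[OF integrable_mult_right[OF integrable_psi]])
       (use ed_le[OF lam] psi_nonneg lam in \<open>auto intro!: mult_right_mono\<close>)
  also have "\<dots> = lam" using integral_psi by simp
  finally show ?thesis using beta by (simp add: field_simps)
qed

lemma integrable_Ip_integrand: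
  assumes lam: "lam > 0"
  shows "integrable lborel (\<lambda>t. exponential_density lam t * psi (beta * (t - w / mu)) ^ n)"
proof -
  have "integrable lborel (exponential_density lam)"
    using exp_moment(1)[OF lam, of 0] by simp
  thus ?thesis
    by (rule Bochner_Integration.integrable_bound)
       (use ed_nonneg[OF lam] psi_nonneg psi_le_quarter in
         \<open>auto intro!: AE_I2 mult_left_le power_le_one order.trans[OF psi_le_quarter] simp: abs_mult\<close>)
qed

lemma Ip2_le:
  assumes lam: "lam > 0" and beta: "beta > 0"
  shows "Ip lam mu beta w 2 \<le> lam / (4 * beta)"
proof -
  have "Ip lam mu beta w 2 \<le> (\<integral>t. (1/4) * (exponential_density lam t * psi (beta * (t - w / mu)) ^ 1) \<partial>lborel)"
    unfolding Ip_def
  proof (rule integral_mono'[OF integrable_mult_right[OF integrable_Ip_integrand[OF lam]]])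
    fix t
    have "psi (beta * (t - w / mu)) ^ 2 \<le> 1/4 * psi (beta * (t - w / mu))"
      using mult_left_mono[OF psi_le_quarter psi_nonneg, of "beta * (t - w / mu)" "beta * (t - w / mu)"]
      by (simp add: power2_eq_square mult.commute)
    thus "exponential_density lam t * psi (beta * (t - w / mu)) ^ 2 \<le> 1 / 4 * (exponential_density lam t * psi (beta * (t - w / mu)) ^ 1)"
      using ed_nonneg[OF lam, of t] by (simp add: mult_left_mono mult_ac)
    show "0 \<le> 1 / 4 * (exponential_density lam t * psi (beta * (t - w / mu)) ^ 1)"
      using ed_nonneg[OF lam, of t] psi_nonneg by simp
  qed
  also have "\<dots> = (1/4) * Ip lam mu beta w 1" unfolding Ip_def by simp
  also have "\<dots> \<le> (1/4) * (lam / beta)" using Ip1_le[OF lam beta] by simp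
  finally show ?thesis by simp
qed

lemma Ip2_ge:
  assumes lam: "lam > 0" and beta: "beta \<ge> 1" and w: "w \<ge> 0" and mu: "mu > 0"
  shows "lam * exp (- lam * (w / mu + 1)) * (exp (-1) / 4)\<^sup>2 / beta \<le> Ip lam mu beta w 2"
proof -
  define v where "v = w / mu"
  have v: "v \<ge> 0" using w mu by (simp add: v_def)
  define c where "c = lam * exp (- lam * (v + 1)) * (exp (-1) / 4)\<^sup>2"
  have "(\<integral>t. indicator {v .. v + 1/beta} t * c \<partial>lborel) \<le> Ip lam mu beta w 2"
    unfolding Ip_def v_def[symmetric]
  proof (rule integral_mono)
    show "integrable lborel (\<lambda>t. indicator {v .. v + 1/beta} t * c)"
      by (intro integrable_mult_left integrable_real_indicator) (auto simp: emeasure_lborel_Icc_eq)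
    show "integrable lborel (\<lambda>t. exponential_density lam t * psi (beta * (t - v)) ^ 2)"
      using integrable_Ip_integrand[OF lam, of beta w mu 2] by (simp add: v_def)
    fix t :: real
    show "indicator {v .. v + 1/beta} t * c \<le> exponential_density lam t * psi (beta * (t - v)) ^ 2"
    proof (cases "t \<in> {v .. v + 1/beta}")
      case True
      have b1: "1 / beta \<le> 1" using beta by simp
      have t0: "0 \<le> t" "t \<le> v + 1" using True v b1 by auto
      have e: "lam * exp (- lam * (v + 1)) \<le> exponential_density lam t"
        using t0 lam by (auto simp: exponential_density_def mult_ac)
      have x: "\<bar>beta * (t - v)\<bar> \<le> 1" using True beta by (auto simp: field_simps)
      have "exp (-1) / 4 \<le> psi (beta * (t - v))"
        using psi_ge_exp[of "beta * (t - v)"] x by (smt (verit) divide_right_mono exp_le_cancel_iff)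
      hence p: "(exp (-1) / 4)\<^sup>2 \<le> psi (beta * (t - v)) ^ 2"
        by (intro power_mono) auto
      have "c \<le> exponential_density lam t * psi (beta * (t - v)) ^ 2"
        unfolding c_def using e p lam by (intro mult_mono) auto
      thus ?thesis using True by simp
    next
      case False
      thus ?thesis using ed_nonneg[OF lam, of t] by simp
    qed
  qed
  also have "(\<integral>t. indicator {v .. v + 1/beta} t * c \<partial>lborel) = c / beta"
    using beta by simp
  finally show ?thesis unfolding c_def v_def by simp
qed

lemma exp_w_int:
  assumes r: "r \<ge> 0"
  shows "integrable lborel (\<lambda>w. exponential_density 1 w * w ^ n * exp (- r * w))"
    and "(\<integral>w. exponential_density 1 w * w ^ n * exp (- r * w) \<partial>lborel) = fact n / (1 + r) ^ (n + 1)"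
proof -
  have k: "1 + r > 0" using r by simp
  have eq: "(\<lambda>w. exponential_density 1 w * w ^ n * exp (- r * w)) = (\<lambda>w. (1 / (1 + r)) * (exponential_density (1 + r) w * w ^ n))"
  proof (rule ext)
    fix w :: real
    show "exponential_density 1 w * w ^ n * exp (- r * w) = (1 / (1 + r)) * (exponential_density (1 + r) w * w ^ n)"
    proof (cases "w < 0")
      case False
      have "exp (- w) * exp (- r * w) = exp (- w * (1 + r))" by (simp add: exp_add[symmetric] algebra_simps)
      thus ?thesis using False k by (simp add: exponential_density_def)
    qed (simp add: exponential_density_def)
  qed
  show "integrable lborel (\<lambda>w. exponential_density 1 w * w ^ n * exp (- r * w))"
    unfolding eq using exp_moment(1)[OF k, of n] by simp
  show "(\<integral>w. exponential_density 1 w * w ^ n * exp (- r * w) \<partial>lborel) = fact n / (1 + r) ^ (n + 1)"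
    unfolding eq using exp_moment(2)[OF k, of n] by simp
qed

lemma target_int:
  assumes lam: "lam > 0" and mu: "mu > 0"
  shows "integrable lborel (\<lambda>w. exponential_density 1 w * w * exponential_density lam (w / mu))"
    and "(\<integral>w. exponential_density 1 w * w * exponential_density lam (w / mu) \<partial>lborel) = lam * mu\<^sup>2 / (lam + mu)\<^sup>2"
proof -
  have eq: "(\<lambda>w. exponential_density 1 w * w * exponential_density lam (w / mu)) =
      (\<lambda>w. lam * (exponential_density 1 w * w ^ 1 * exp (- (lam / mu) * w)))"
    using mu by (auto simp: fun_eq_iff exponential_density_def algebra_simps divide_less_0_iff)
  have r: "lam / mu \<ge> 0" using lam mu by simp
  show "integrable lborel (\<lambda>w. exponential_density 1 w * w * exponential_density lam (w / mu))"
    unfolding eq using exp_w_int(1)[OF r, of 1] by simp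
  have "(\<integral>w. exponential_density 1 w * w * exponential_density lam (w / mu) \<partial>lborel) = lam * (1 / (1 + lam / mu)\<^sup>2)"
    unfolding eq using exp_w_int(2)[OF r, of 1] by (simp add: power2_eq_square)
  also have "\<dots> = lam * mu\<^sup>2 / (lam + mu)\<^sup>2"
    using lam mu by (simp add: field_simps power2_eq_square)
  finally show "(\<integral>w. exponential_density 1 w * w * exponential_density lam (w / mu) \<partial>lborel) = lam * mu\<^sup>2 / (lam + mu)\<^sup>2" .
qed

lemma pw_bound:
  assumes lam: "lam > 0" and v: "v \<ge> 0" and b1: "beta \<ge> 1" and b4: "beta \<ge> 4 * lam"
  shows "\<bar>(exponential_density lam (v + s / beta) - exponential_density lam v + exponential_density lam v * lam * s / beta) * psi s\<bar>
     \<le> lam ^ 3 / (2 * beta\<^sup>2) * (\<bar>s\<bar> ^ 2 * exp (- \<bar>s\<bar> / 2))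
        + lam * exp (- beta * v / 2) * (\<bar>s\<bar> ^ 0 * exp (- \<bar>s\<bar> / 2) + lam * (\<bar>s\<bar> ^ 1 * exp (- \<bar>s\<bar> / 2)))"
    (is "?L \<le> ?A + ?B")
proof -
  have beta: "beta > 0" using b1 by simp
  have psi0: "0 \<le> psi s" and psie: "psi s \<le> exp (- \<bar>s\<bar>)" using psi_nonneg psi_le_exp by auto
  have A0: "0 \<le> ?A" and B0: "0 \<le> ?B" using lam by auto
  show ?thesis
  proof (cases "v + s / beta < 0")
    case False
    define x where "x = - lam * s / beta"
    have ed1: "exponential_density lam (v + s / beta) = lam * exp (- lam * v) * exp x"
      using False unfolding x_def exponential_density_def
      by (simp add: exp_add[symmetric] algebra_simps add_divide_distrib)
    have ed2: "exponential_density lam v = lam * exp (- lam * v)"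
      using v by (simp add: exponential_density_def mult.commute)
    have E: "exponential_density lam (v + s / beta) - exponential_density lam v + exponential_density lam v * lam * s / beta
        = lam * exp (- lam * v) * (exp x - 1 - x)"
      unfolding ed1 ed2 x_def by (simp add: algebra_simps)
    obtain t where t: "\<bar>t\<bar> \<le> \<bar>x\<bar>" and tx: "exp x = (\<Sum>m<2. x ^ m / fact m) + exp t / fact 2 * x ^ 2"
      using Maclaurin_exp_le[of x 2] by blast
    have "exp x - 1 - x = exp t / 2 * x\<^sup>2" using tx by (simp add: eval_nat_numeral)
    moreover have "exp t \<le> exp \<bar>x\<bar>" using t by simp
    ultimately have T: "\<bar>exp x - 1 - x\<bar> \<le> exp \<bar>x\<bar> / 2 * x\<^sup>2"
    proof -
      assume e1: "exp x - 1 - x = exp t / 2 * x\<^sup>2" and e2: "exp t \<le> exp \<bar>x\<bar>"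
      have "\<bar>exp x - 1 - x\<bar> = exp t / 2 * x\<^sup>2" unfolding e1 by simp
      also have "\<dots> \<le> exp \<bar>x\<bar> / 2 * x\<^sup>2" using e2 by (intro mult_right_mono divide_right_mono) auto
      finally show ?thesis .
    qed
    have ax: "\<bar>x\<bar> \<le> \<bar>s\<bar> / 4"
    proof -
      have "\<bar>x\<bar> = lam * \<bar>s\<bar> / beta" unfolding x_def using lam beta by (simp add: abs_mult abs_divide)
      also have "\<dots> \<le> (beta / 4) * \<bar>s\<bar> / beta" using b4 beta by (intro divide_right_mono mult_right_mono) auto
      finally show ?thesis using beta by simp
    qed
    have ex: "exp (- lam * v) * exp \<bar>x\<bar> * exp (- \<bar>s\<bar>) \<le> exp (- \<bar>s\<bar> / 2)"
    proof -
      have "0 \<le> lam * v" using lam v by simp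
      hence "- lam * v + \<bar>x\<bar> + - \<bar>s\<bar> \<le> - \<bar>s\<bar> / 2" using ax by linarith
      thus ?thesis by (simp add: exp_add[symmetric])
    qed
    have x2: "x\<^sup>2 = lam\<^sup>2 * s\<^sup>2 / beta\<^sup>2" unfolding x_def by (simp add: power_divide power_mult_distrib)
    have "?L = lam * exp (- lam * v) * \<bar>exp x - 1 - x\<bar> * psi s"
      unfolding E using lam psi0 by (simp add: abs_mult)
    also have "\<dots> \<le> lam * exp (- lam * v) * (exp \<bar>x\<bar> / 2 * x\<^sup>2) * exp (- \<bar>s\<bar>)"
    proof -
      have P1: "lam * exp (- lam * v) * \<bar>exp x - 1 - x\<bar> \<le> lam * exp (- lam * v) * (exp \<bar>x\<bar> / 2 * x\<^sup>2)"
        using T lam by (intro mult_left_mono) auto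
      have "0 \<le> lam * exp (- lam * v) * (exp \<bar>x\<bar> / 2 * x\<^sup>2)" using lam by simp
      thus ?thesis by (rule mult_mono[OF P1 psie _ psi0])
    qed
    also have "\<dots> = (lam * x\<^sup>2 / 2) * (exp (- lam * v) * exp \<bar>x\<bar> * exp (- \<bar>s\<bar>))"
      by (simp add: algebra_simps)
    also have "\<dots> \<le> (lam * x\<^sup>2 / 2) * exp (- \<bar>s\<bar> / 2)"
      using ex lam by (intro mult_left_mono) auto
    also have "\<dots> = ?A" unfolding x2 using beta by (simp add: field_simps power2_eq_square power3_eq_cube)
    finally show ?thesis using B0 by simp
  next
    case True
    have sb: "s + beta * v < 0" using True beta by (simp add: field_simps)
    have "0 \<le> beta * v" using v beta by simp
    hence s: "s < 0" "beta * v \<le> \<bar>s\<bar>" using sb by auto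
    have ed1: "exponential_density lam (v + s / beta) = 0" using True by (simp add: exponential_density_def)
    have edv: "0 \<le> exponential_density lam v" "exponential_density lam v \<le> lam"
      using ed_nonneg[OF lam] ed_le[OF lam] by auto
    have f: "\<bar>lam * s / beta - 1\<bar> \<le> 1 + lam * \<bar>s\<bar>"
    proof -
      have "\<bar>lam * s / beta\<bar> = lam * \<bar>s\<bar> / beta" using lam b1 by (simp add: abs_mult abs_divide)
      also have "\<dots> \<le> lam * \<bar>s\<bar> / 1" using lam b1 by (intro divide_left_mono) auto
      finally have "\<bar>lam * s / beta\<bar> \<le> lam * \<bar>s\<bar>" by simp
      thus ?thesis by linarith
    qed
    have "?L = exponential_density lam v * \<bar>lam * s / beta - 1\<bar> * psi s"
    proof -
      have "(0 - exponential_density lam v + exponential_density lam v * lam * s / beta) * psi s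
          = (exponential_density lam v * (lam * s / beta - 1)) * psi s" by (simp add: algebra_simps)
      thus ?thesis unfolding ed1 using edv psi0 by (simp only: abs_mult abs_of_nonneg)
    qed
    also have "\<dots> \<le> lam * (1 + lam * \<bar>s\<bar>) * exp (- \<bar>s\<bar>)"
      using edv f psie psi0 lam by (intro mult_mono) auto
    also have "exp (- \<bar>s\<bar>) \<le> exp (- beta * v / 2) * exp (- \<bar>s\<bar> / 2)"
      using s by (simp add: exp_add[symmetric])
    hence "lam * (1 + lam * \<bar>s\<bar>) * exp (- \<bar>s\<bar>) \<le> lam * (1 + lam * \<bar>s\<bar>) * (exp (- beta * v / 2) * exp (- \<bar>s\<bar> / 2))"
      using lam by (intro mult_left_mono) auto
    also have "\<dots> = ?B" by (simp add: algebra_simps)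
    finally show ?thesis using A0 by simp
  qed
qed

definition K :: "nat \<Rightarrow> real" where "K n = (\<integral>s. \<bar>s\<bar> ^ n * exp (- \<bar>s\<bar> / 2) \<partial>lborel)"

lemma K_nonneg: "0 \<le> K n"
  unfolding K_def by (intro integral_nonneg_AE AE_I2) simp

lemma bias_inner:
  assumes lam: "lam > 0" and mu: "mu > 0" and w: "w \<ge> 0" and b1: "beta \<ge> 1" and b4: "beta \<ge> 4 * lam"
  shows "\<bar>beta * Ip lam mu beta w 1 - exponential_density lam (w / mu)\<bar>
     \<le> lam ^ 3 / (2 * beta\<^sup>2) * K 2 + lam * exp (- beta * (w / mu) / 2) * (K 0 + lam * K 1)"
proof -
  define v where "v = w / mu"
  have v: "v \<ge> 0" using w mu by (simp add: v_def)
  have beta: "beta > 0" using b1 by simp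
  let ?f1 = "\<lambda>s. exponential_density lam (v + s / beta) * psi s"
  let ?f2 = "\<lambda>s. exponential_density lam v * psi s"
  let ?f3 = "\<lambda>s. (exponential_density lam v * lam / beta) * (s * psi s)"
  have i1: "integrable lborel ?f1" by (rule integrable_ed_psi[OF lam])
  have i2: "integrable lborel ?f2" using integrable_psi by simp
  have i3: "integrable lborel ?f3" using integrable_s_psi by simp
  have I1: "integral\<^sup>L lborel ?f1 = beta * Ip lam mu beta w 1" unfolding v_def using Ip1_subst[OF beta] by simp
  have I2: "integral\<^sup>L lborel ?f2 = exponential_density lam v" using integral_psi by simp
  have I3: "integral\<^sup>L lborel ?f3 = 0" using integral_s_psi by simp
  let ?h = "\<lambda>s. (exponential_density lam (v + s / beta) - exponential_density lam v + exponential_density lam v * lam * s / beta) * psi s"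
  have hh: "?h = (\<lambda>s. ?f1 s - ?f2 s + ?f3 s)" by (auto simp: fun_eq_iff algebra_simps)
  have "beta * Ip lam mu beta w 1 - exponential_density lam v = integral\<^sup>L lborel ?f1 - integral\<^sup>L lborel ?f2 + integral\<^sup>L lborel ?f3"
    by (simp only: I1 I2 I3)
  also have "\<dots> = integral\<^sup>L lborel ?h"
    unfolding hh using i1 i2 i3 by simp
  finally have eqh: "beta * Ip lam mu beta w 1 - exponential_density lam v = integral\<^sup>L lborel ?h" .
  let ?g = "\<lambda>s. lam ^ 3 / (2 * beta\<^sup>2) * (\<bar>s\<bar> ^ 2 * exp (- \<bar>s\<bar> / 2))
        + lam * exp (- beta * v / 2) * (\<bar>s\<bar> ^ 0 * exp (- \<bar>s\<bar> / 2) + lam * (\<bar>s\<bar> ^ 1 * exp (- \<bar>s\<bar> / 2)))"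
  have ig: "integrable lborel ?g"
    using integrable_abs_pow_exp[of 0] integrable_abs_pow_exp[of 1] integrable_abs_pow_exp[of 2]
    by (intro Bochner_Integration.integrable_add integrable_mult_right) auto
  have Ig: "integral\<^sup>L lborel ?g = lam ^ 3 / (2 * beta\<^sup>2) * K 2 + lam * exp (- beta * v / 2) * (K 0 + lam * K 1)"
    using integrable_abs_pow_exp[of 0] integrable_abs_pow_exp[of 1] integrable_abs_pow_exp[of 2]
    unfolding K_def by (simp add: Bochner_Integration.integral_add)
  have "\<bar>integral\<^sup>L lborel ?h\<bar> \<le> (\<integral>s. \<bar>?h s\<bar> \<partial>lborel)" by (rule integral_abs_bound)
  also have "\<dots> \<le> integral\<^sup>L lborel ?g"
    by (rule integral_mono'[OF ig]) (use pw_bound[OF lam v b1 b4] lam in \<open>auto simp del: power_Suc\<close>)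
  finally show ?thesis using eqh Ig unfolding v_def by simp
qed

definition Cb :: "real \<Rightarrow> real \<Rightarrow> real" where
  "Cb lam mu = 2 / mu\<^sup>2 * (lam ^ 3 / 2 * K 2 + lam * (K 0 + lam * K 1) * 4 * mu\<^sup>2)"

lemma ed1_w_nonneg: "0 \<le> exponential_density 1 w * w"
  by (auto simp: exponential_density_def)

lemma bias:
  assumes lam: "lam > 0" and mu: "mu > 0" and b1: "beta \<ge> 1" and b4: "beta \<ge> 4 * lam"
  shows "\<bar>- 2 * beta / mu\<^sup>2 * (\<integral>w. exponential_density 1 w * w * Ip lam mu beta w 1 \<partial>lborel) - target lam mu\<bar>
     \<le> Cb lam mu / beta\<^sup>2"
proof -
  have beta: "beta > 0" using b1 by simp
  define A where "A = lam ^ 3 / 2 * K 2"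
  define Bc where "Bc = lam * (K 0 + lam * K 1)"
  have A0: "0 \<le> A" and B0: "0 \<le> Bc" using lam K_nonneg unfolding A_def Bc_def by auto
  let ?p = "\<lambda>w. exponential_density 1 w * w * (beta * Ip lam mu beta w 1)"
  let ?q = "\<lambda>w. exponential_density 1 w * w * exponential_density lam (w / mu)"
  have iq: "integrable lborel ?q" by (rule target_int(1)[OF lam mu])
  have ip: "integrable lborel ?p"
  proof (rule Bochner_Integration.integrable_bound)
    show "integrable lborel (\<lambda>w. lam * (exponential_density 1 w * w ^ 1))"
      using exp_moment(1)[of 1 1] by simp
    show "AE x in lborel. norm (?p x) \<le> norm (lam * (exponential_density 1 x * x ^ 1))"
    proof (rule AE_I2)
      fix x :: real
      have "0 \<le> beta * Ip lam mu beta x 1" "beta * Ip lam mu beta x 1 \<le> lam"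
        using Ip_nonneg[OF lam] Ip1_le[OF lam beta, of mu x] beta by (auto simp: field_simps)
      hence "(exponential_density 1 x * x) * (beta * Ip lam mu beta x 1) \<le> (exponential_density 1 x * x) * lam"
        using ed1_w_nonneg[of x] by (intro mult_left_mono) auto
      moreover have "0 \<le> (exponential_density 1 x * x) * (beta * Ip lam mu beta x 1)"
        using ed1_w_nonneg[of x] \<open>0 \<le> beta * Ip lam mu beta x 1\<close> by simp
      ultimately show "norm (?p x) \<le> norm (lam * (exponential_density 1 x * x ^ 1))"
        using ed1_w_nonneg[of x] lam by (simp add: mult.commute)
    qed
  qed simp
  have tgt: "target lam mu = - 2 / mu\<^sup>2 * integral\<^sup>L lborel ?q"
    unfolding target_def target_int(2)[OF lam mu] using mu by (simp add: field_simps)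
  have lhs: "- 2 * beta / mu\<^sup>2 * (\<integral>w. exponential_density 1 w * w * Ip lam mu beta w 1 \<partial>lborel)
     = - 2 / mu\<^sup>2 * integral\<^sup>L lborel ?p"
  proof -
    have "integral\<^sup>L lborel ?p = beta * (\<integral>w. exponential_density 1 w * w * Ip lam mu beta w 1 \<partial>lborel)"
      by (subst integral_mult_right_zero[symmetric]) (simp add: mult_ac)
    thus ?thesis by simp
  qed
  define r where "r = beta / (2 * mu)"
  have r0: "r \<ge> 0" using beta mu by (simp add: r_def)
  let ?g = "\<lambda>w. A / beta\<^sup>2 * (exponential_density 1 w * w ^ 1) + Bc * (exponential_density 1 w * w ^ 1 * exp (- r * w))"
  have ig: "integrable lborel ?g"
    using exp_moment(1)[of 1 1] exp_w_int(1)[OF r0, of 1]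
    by (intro Bochner_Integration.integrable_add integrable_mult_right) auto
  have Ig: "integral\<^sup>L lborel ?g = A / beta\<^sup>2 + Bc / (1 + r)\<^sup>2"
    using exp_moment[of 1 1] exp_w_int[OF r0, of 1]
    by (simp add: Bochner_Integration.integral_add power2_eq_square)
  have "\<bar>integral\<^sup>L lborel ?p - integral\<^sup>L lborel ?q\<bar> = \<bar>\<integral>w. ?p w - ?q w \<partial>lborel\<bar>"
    using ip iq by simp
  also have "\<dots> \<le> (\<integral>w. \<bar>?p w - ?q w\<bar> \<partial>lborel)" by (rule integral_abs_bound)
  also have "\<dots> \<le> integral\<^sup>L lborel ?g"
  proof (rule integral_mono'[OF ig])
    fix w :: real
    show "0 \<le> ?g w" using A0 B0 beta ed1_w_nonneg[of w] by simp
    show "\<bar>?p w - ?q w\<bar> \<le> ?g w"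
    proof (cases "w < 0")
      case True
      thus ?thesis using A0 B0 by (simp add: exponential_density_def)
    next
      case False
      have bi: "\<bar>beta * Ip lam mu beta w 1 - exponential_density lam (w / mu)\<bar>
          \<le> lam ^ 3 / (2 * beta\<^sup>2) * K 2 + lam * exp (- beta * (w / mu) / 2) * (K 0 + lam * K 1)"
        using bias_inner[OF lam mu _ b1 b4] False by simp
      have ex: "exp (- beta * (w / mu) / 2) = exp (- r * w)" unfolding r_def using mu by (simp add: field_simps)
      have "\<bar>?p w - ?q w\<bar> = (exponential_density 1 w * w) * \<bar>beta * Ip lam mu beta w 1 - exponential_density lam (w / mu)\<bar>"
      proof -
        have "?p w - ?q w = (exponential_density 1 w * w) * (beta * Ip lam mu beta w 1 - exponential_density lam (w / mu))"
          by (simp add: algebra_simps)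
        thus ?thesis by (simp only: abs_mult[of "exponential_density 1 w * w"] abs_of_nonneg[OF ed1_w_nonneg])
      qed
      also have "\<dots> \<le> (exponential_density 1 w * w) * (A / beta\<^sup>2 + Bc * exp (- r * w))"
        using bi ed1_w_nonneg[of w] unfolding A_def Bc_def ex
        by (intro mult_left_mono) (auto simp: field_simps)
      also have "\<dots> = ?g w" by (simp add: algebra_simps)
      finally show ?thesis .
    qed
  qed
  also have "\<dots> = A / beta\<^sup>2 + Bc / (1 + r)\<^sup>2" by (rule Ig)
  also have "\<dots> \<le> A / beta\<^sup>2 + Bc * (4 * mu\<^sup>2) / beta\<^sup>2"
  proof -
    have "r\<^sup>2 \<le> (1 + r)\<^sup>2" using r0 by (intro power_mono) auto
    moreover have "0 < r" using beta mu by (simp add: r_def)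
    ultimately have "1 / (1 + r)\<^sup>2 \<le> 1 / r\<^sup>2" by (intro divide_left_mono) auto
    also have "1 / r\<^sup>2 = 4 * mu\<^sup>2 / beta\<^sup>2" unfolding r_def using mu beta by (simp add: field_simps power2_eq_square)
    finally have "Bc * (1 / (1 + r)\<^sup>2) \<le> Bc * (4 * mu\<^sup>2 / beta\<^sup>2)" using B0 by (intro mult_left_mono)
    thus ?thesis by simp
  qed
  finally have D: "\<bar>integral\<^sup>L lborel ?p - integral\<^sup>L lborel ?q\<bar> \<le> (A + Bc * (4 * mu\<^sup>2)) / beta\<^sup>2"
    by (simp add: add_divide_distrib)
  have "\<bar>- 2 * beta / mu\<^sup>2 * (\<integral>w. exponential_density 1 w * w * Ip lam mu beta w 1 \<partial>lborel) - target lam mu\<bar>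
      = 2 / mu\<^sup>2 * \<bar>integral\<^sup>L lborel ?p - integral\<^sup>L lborel ?q\<bar>"
  proof -
    have gen: "\<bar>- 2 / mu\<^sup>2 * P - - 2 / mu\<^sup>2 * Q\<bar> = 2 / mu\<^sup>2 * \<bar>P - Q\<bar>" for P Q :: real
    proof -
      have "- 2 / mu\<^sup>2 * P - - 2 / mu\<^sup>2 * Q = (- 2 / mu\<^sup>2) * (P - Q)" using mu by (simp add: field_simps)
      moreover have "\<bar>- 2 / mu\<^sup>2\<bar> = 2 / mu\<^sup>2" using mu by simp
      ultimately show ?thesis by (simp only: abs_mult)
    qed
    show ?thesis unfolding lhs tgt by (rule gen)
  qed
  also have "\<dots> \<le> 2 / mu\<^sup>2 * ((A + Bc * (4 * mu\<^sup>2)) / beta\<^sup>2)"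
    using D mu by (intro mult_left_mono) auto
  also have "\<dots> = Cb lam mu / beta\<^sup>2" unfolding Cb_def A_def Bc_def by (simp add: algebra_simps)
  finally show ?thesis .
qed

lemma ed1_w2_nonneg: "0 \<le> exponential_density 1 w * w\<^sup>2"
  by (auto simp: exponential_density_def)

lemma integrable_Ip2_outer:
  assumes lam: "lam > 0" and beta: "beta > 0"
  shows "integrable lborel (\<lambda>w. exponential_density 1 w * w\<^sup>2 * Ip lam mu beta w 2)"
proof (rule Bochner_Integration.integrable_bound)
  show "integrable lborel (\<lambda>w. lam / (4 * beta) * (exponential_density 1 w * w ^ 2))"
    using exp_moment(1)[of 1 2] by simp
  show "AE x in lborel. norm (exponential_density 1 x * x\<^sup>2 * Ip lam mu beta x 2) \<le> norm (lam / (4 * beta) * (exponential_density 1 x * x ^ 2))"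
  proof (rule AE_I2)
    fix x :: real
    have "(exponential_density 1 x * x\<^sup>2) * Ip lam mu beta x 2 \<le> (exponential_density 1 x * x\<^sup>2) * (lam / (4 * beta))"
      using Ip2_le[OF lam beta] ed1_w2_nonneg[of x] by (intro mult_left_mono) auto
    moreover have "0 \<le> (exponential_density 1 x * x\<^sup>2) * Ip lam mu beta x 2"
      using Ip_nonneg[OF lam] ed1_w2_nonneg[of x] by simp
    ultimately show "norm (exponential_density 1 x * x\<^sup>2 * Ip lam mu beta x 2) \<le> norm (lam / (4 * beta) * (exponential_density 1 x * x ^ 2))"
      using lam beta ed1_w2_nonneg[of x] by (simp add: mult.commute)
  qed
qed simp

lemma s2_upper:
  assumes lam: "lam > 0" and mu: "mu > 0" and beta: "beta > 0"
  shows "integral\<^sup>L (sample_law lam) (\<lambda>x. (G beta mu x)\<^sup>2) \<le> 2 * lam * beta / mu ^ 4"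
proof -
  have "(\<integral>w. exponential_density 1 w * w\<^sup>2 * Ip lam mu beta w 2 \<partial>lborel) \<le> (\<integral>w. lam / (4 * beta) * (exponential_density 1 w * w ^ 2) \<partial>lborel)"
  proof (rule integral_mono')
    show "integrable lborel (\<lambda>w. lam / (4 * beta) * (exponential_density 1 w * w ^ 2))"
      using exp_moment(1)[of 1 2] by simp
    fix x :: real
    show "exponential_density 1 x * x\<^sup>2 * Ip lam mu beta x 2 \<le> lam / (4 * beta) * (exponential_density 1 x * x ^ 2)"
      using mult_left_mono[OF Ip2_le[OF lam beta, of mu x] ed1_w2_nonneg[of x]] by (simp add: mult.commute)
    show "0 \<le> lam / (4 * beta) * (exponential_density 1 x * x ^ 2)"
      using lam beta ed1_w2_nonneg[of x] by simp
  qed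
  also have "\<dots> = lam / (2 * beta)" using exp_moment(2)[of 1 2] by simp
  finally have I: "(\<integral>w. exponential_density 1 w * w\<^sup>2 * Ip lam mu beta w 2 \<partial>lborel) \<le> lam / (2 * beta)" .
  have "integral\<^sup>L (sample_law lam) (\<lambda>x. (G beta mu x)\<^sup>2) \<le> 4 * beta\<^sup>2 / mu ^ 4 * (lam / (2 * beta))"
    unfolding second_G(2)[OF lam mu beta] using I mu by (intro mult_left_mono) auto
  also have "\<dots> = 2 * lam * beta / mu ^ 4" using beta by (simp add: field_simps power2_eq_square)
  finally show ?thesis .
qed

definition cL :: "real \<Rightarrow> real \<Rightarrow> real" where
  "cL lam mu = 4 / mu ^ 4 * (lam * exp (- lam) * (exp (-1) / 4)\<^sup>2 * (2 / (1 + lam / mu) ^ 3))"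

lemma cL_pos: "lam > 0 \<Longrightarrow> mu > 0 \<Longrightarrow> cL lam mu > 0"
  unfolding cL_def by (simp add: add_pos_pos)

lemma s2_lower:
  assumes lam: "lam > 0" and mu: "mu > 0" and b1: "beta \<ge> 1"
  shows "cL lam mu * beta \<le> integral\<^sup>L (sample_law lam) (\<lambda>x. (G beta mu x)\<^sup>2)"
proof -
  have beta: "beta > 0" using b1 by simp
  define c where "c = lam * exp (- lam) * (exp (-1) / 4)\<^sup>2 / beta"
  have c0: "0 \<le> c" using lam beta by (simp add: c_def)
  have r0: "lam / mu \<ge> 0" using lam mu by simp
  have "(\<integral>w. c * (exponential_density 1 w * w ^ 2 * exp (- (lam / mu) * w)) \<partial>lborel)
      \<le> (\<integral>w. exponential_density 1 w * w\<^sup>2 * Ip lam mu beta w 2 \<partial>lborel)"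
  proof (rule integral_mono)
    show "integrable lborel (\<lambda>w. c * (exponential_density 1 w * w ^ 2 * exp (- (lam / mu) * w)))"
      using exp_w_int(1)[OF r0, of 2] by simp
    show "integrable lborel (\<lambda>w. exponential_density 1 w * w\<^sup>2 * Ip lam mu beta w 2)"
      by (rule integrable_Ip2_outer[OF lam beta])
    fix w :: real
    show "c * (exponential_density 1 w * w ^ 2 * exp (- (lam / mu) * w)) \<le> exponential_density 1 w * w\<^sup>2 * Ip lam mu beta w 2"
    proof (cases "w < 0")
      case True thus ?thesis by (simp add: exponential_density_def)
    next
      case False
      have g: "lam * exp (- lam * (w / mu + 1)) * (exp (-1) / 4)\<^sup>2 / beta \<le> Ip lam mu beta w 2"
        using Ip2_ge[OF lam b1 _ mu] False by simp
      have "lam * exp (- lam * (w / mu + 1)) * (exp (-1) / 4)\<^sup>2 / beta = c * exp (- (lam / mu) * w)"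
        unfolding c_def by (simp add: exp_add[symmetric] algebra_simps)
      hence "c * exp (- (lam / mu) * w) \<le> Ip lam mu beta w 2" using g by simp
      hence "(exponential_density 1 w * w ^ 2) * (c * exp (- (lam / mu) * w)) \<le> (exponential_density 1 w * w ^ 2) * Ip lam mu beta w 2"
        using ed1_w2_nonneg[of w] by (intro mult_left_mono) auto
      thus ?thesis by (simp add: mult_ac)
    qed
  qed
  also have "(\<integral>w. c * (exponential_density 1 w * w ^ 2 * exp (- (lam / mu) * w)) \<partial>lborel) = c * (2 / (1 + lam / mu) ^ 3)"
    using exp_w_int(2)[OF r0, of 2] by simp
  finally have I: "c * (2 / (1 + lam / mu) ^ 3) \<le> (\<integral>w. exponential_density 1 w * w\<^sup>2 * Ip lam mu beta w 2 \<partial>lborel)" .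
  have "4 * beta\<^sup>2 / mu ^ 4 * (c * (2 / (1 + lam / mu) ^ 3)) \<le> integral\<^sup>L (sample_law lam) (\<lambda>x. (G beta mu x)\<^sup>2)"
    unfolding second_G(2)[OF lam mu beta] using I mu by (intro mult_left_mono) auto
  moreover have "4 * beta\<^sup>2 / mu ^ 4 * (c * (2 / (1 + lam / mu) ^ 3)) = cL lam mu * beta"
    unfolding c_def cL_def using beta by (simp add: field_simps power2_eq_square)
  ultimately show ?thesis by simp
qed

lemma mse_decomp:
  fixes M :: "'a measure" and X :: "'a \<Rightarrow> real" and B :: nat
  assumes P: "prob_space M" and iX: "integrable M X" and iX2: "integrable M (\<lambda>x. (X x)\<^sup>2)" and B: "B \<ge> 1"
  shows "(\<integral>\<omega>. ((\<Sum>i<B. X (\<omega> i)) / real B - t)\<^sup>2 \<partial>PiM {..<B} (\<lambda>_. M))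
       = (integral\<^sup>L M X - t)\<^sup>2 + (integral\<^sup>L M (\<lambda>x. (X x)\<^sup>2) - (integral\<^sup>L M X)\<^sup>2) / real B"
proof -
  interpret prob_space M by fact
  interpret PP: product_sigma_finite "\<lambda>_. M"
    by (simp add: product_sigma_finite_def sigma_finite_measure_axioms)
  define Y where "Y x = X x - t" for x
  have iY: "integrable M Y" unfolding Y_def using iX by auto
  have iY2: "integrable M (\<lambda>x. Y x * Y x)"
  proof -
    have "(\<lambda>x. Y x * Y x) = (\<lambda>x. (X x)\<^sup>2 - 2 * t * X x + t\<^sup>2)" unfolding Y_def
      by (auto simp: power2_eq_square algebra_simps)
    thus ?thesis using iX iX2 by auto
  qed
  have EY: "integral\<^sup>L M Y = integral\<^sup>L M X - t" unfolding Y_def using iX by (simp add: prob_space)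
  have EY2: "integral\<^sup>L M (\<lambda>x. Y x * Y x) = integral\<^sup>L M (\<lambda>x. (X x)\<^sup>2) - 2 * t * integral\<^sup>L M X + t\<^sup>2"
  proof -
    have "(\<lambda>x. Y x * Y x) = (\<lambda>x. ((X x)\<^sup>2 - 2 * t * X x) + t\<^sup>2)" unfolding Y_def
      by (auto simp: power2_eq_square algebra_simps)
    thus ?thesis using iX iX2 by (simp add: prob_space)
  qed
  define f where "f i j k x = (if k = i then Y x else 1) * (if k = j then Y x else 1)" for i j k :: nat and x
  have intf: "integrable M (f i j k)" for i j k
    unfolding f_def using iY iY2 by (cases "k = i"; cases "k = j") auto
  have prodf: "(\<Prod>k<B. f i j k (\<omega> k)) = Y (\<omega> i) * Y (\<omega> j)" if "i < B" "j < B" for i j \<omega>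
    unfolding f_def using that by (simp add: prod.distrib)
  have cij: "(\<integral>\<omega>. Y (\<omega> i) * Y (\<omega> j) \<partial>PiM {..<B} (\<lambda>_. M)) =
      (if i = j then integral\<^sup>L M (\<lambda>x. Y x * Y x) else (integral\<^sup>L M Y)\<^sup>2)" if "i < B" "j < B" for i j
  proof -
    have "(\<integral>\<omega>. Y (\<omega> i) * Y (\<omega> j) \<partial>PiM {..<B} (\<lambda>_. M)) = (\<integral>\<omega>. (\<Prod>k<B. f i j k (\<omega> k)) \<partial>PiM {..<B} (\<lambda>_. M))"
      using prodf[OF that] by simp
    also have "\<dots> = (\<Prod>k<B. integral\<^sup>L M (f i j k))"
      by (rule PP.product_integral_prod) (auto intro: intf)
    also have "\<dots> = (if i = j then integral\<^sup>L M (\<lambda>x. Y x * Y x) else (integral\<^sup>L M Y)\<^sup>2)"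
    proof (cases "i = j")
      case True
      have "integral\<^sup>L M (f i j k) = (if k = i then integral\<^sup>L M (\<lambda>x. Y x * Y x) else 1)" for k
        unfolding f_def using True by (auto simp: prob_space)
      thus ?thesis using True that by simp
    next
      case False
      have "integral\<^sup>L M (f i j k) = (if k = i then integral\<^sup>L M Y else 1) * (if k = j then integral\<^sup>L M Y else 1)" for k
        unfolding f_def using False by (auto simp: prob_space)
      thus ?thesis using False that by (simp add: prod.distrib power2_eq_square)
    qed
    finally show ?thesis .
  qed
  have eqi: "((\<Sum>i<B. X (\<omega> i)) / real B - t)\<^sup>2 = (\<Sum>i<B. \<Sum>j<B. Y (\<omega> i) * Y (\<omega> j)) / (real B)\<^sup>2" for \<omega>
  proof -
    have "(\<Sum>i<B. X (\<omega> i)) / real B - t = (\<Sum>i<B. Y (\<omega> i)) / real B"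
      using B by (simp add: Y_def sum_subtractf field_simps)
    thus ?thesis by (simp add: power_divide power2_eq_square sum_product)
  qed
  have intij: "integrable (PiM {..<B} (\<lambda>_. M)) (\<lambda>\<omega>. Y (\<omega> i) * Y (\<omega> j))" if "i < B" "j < B" for i j
  proof -
    have "integrable (PiM {..<B} (\<lambda>_. M)) (\<lambda>\<omega>. (\<Prod>k<B. f i j k (\<omega> k)))"
      by (rule PP.product_integrable_prod) (auto intro: intf)
    thus ?thesis using prodf[OF that] by simp
  qed
  have "(\<integral>\<omega>. ((\<Sum>i<B. X (\<omega> i)) / real B - t)\<^sup>2 \<partial>PiM {..<B} (\<lambda>_. M))
      = (\<Sum>i<B. \<Sum>j<B. (\<integral>\<omega>. Y (\<omega> i) * Y (\<omega> j) \<partial>PiM {..<B} (\<lambda>_. M))) / (real B)\<^sup>2"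
  proof -
    have "(\<integral>\<omega>. (\<Sum>i<B. \<Sum>j<B. Y (\<omega> i) * Y (\<omega> j)) \<partial>PiM {..<B} (\<lambda>_. M))
       = (\<Sum>i<B. (\<integral>\<omega>. (\<Sum>j<B. Y (\<omega> i) * Y (\<omega> j)) \<partial>PiM {..<B} (\<lambda>_. M)))"
      by (rule Bochner_Integration.integral_sum[where I="{..<B}" and f="\<lambda>i \<omega>. \<Sum>j<B. Y (\<omega> i) * Y (\<omega> j)"]) (auto intro!: intij)
    also have "\<dots> = (\<Sum>i<B. \<Sum>j<B. (\<integral>\<omega>. Y (\<omega> i) * Y (\<omega> j) \<partial>PiM {..<B} (\<lambda>_. M)))"
      by (rule sum.cong[OF refl], rule Bochner_Integration.integral_sum[where I="{..<B}" and f="\<lambda>j \<omega>. Y (\<omega> i) * Y (\<omega> j)" for i]) (auto intro!: intij)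
    finally show ?thesis unfolding eqi by simp
  qed
  also have "\<dots> = (\<Sum>i<B. \<Sum>j<B. (if i = j then integral\<^sup>L M (\<lambda>x. Y x * Y x) else (integral\<^sup>L M Y)\<^sup>2)) / (real B)\<^sup>2"
    using cij by simp
  also have "(\<Sum>i<B. \<Sum>j<B. (if i = j then integral\<^sup>L M (\<lambda>x. Y x * Y x) else (integral\<^sup>L M Y)\<^sup>2))
      = (\<Sum>i<B. integral\<^sup>L M (\<lambda>x. Y x * Y x) + (real B - 1) * (integral\<^sup>L M Y)\<^sup>2)"
  proof (rule sum.cong[OF refl])
    fix i assume i: "i \<in> {..<B}"
    have "(\<Sum>j<B. (if i = j then integral\<^sup>L M (\<lambda>x. Y x * Y x) else (integral\<^sup>L M Y)\<^sup>2))
       = (\<Sum>j<B. (if i = j then integral\<^sup>L M (\<lambda>x. Y x * Y x) - (integral\<^sup>L M Y)\<^sup>2 else 0) + (integral\<^sup>L M Y)\<^sup>2)"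
      by (rule sum.cong) auto
    also have "\<dots> = integral\<^sup>L M (\<lambda>x. Y x * Y x) + (real B - 1) * (integral\<^sup>L M Y)\<^sup>2"
      using i by (simp add: sum.distrib algebra_simps)
    finally show "(\<Sum>j<B. (if i = j then integral\<^sup>L M (\<lambda>x. Y x * Y x) else (integral\<^sup>L M Y)\<^sup>2))
       = integral\<^sup>L M (\<lambda>x. Y x * Y x) + (real B - 1) * (integral\<^sup>L M Y)\<^sup>2" .
  qed
  also have "\<dots> = real B * (integral\<^sup>L M (\<lambda>x. Y x * Y x) + (real B - 1) * (integral\<^sup>L M Y)\<^sup>2)" by simp
  finally show ?thesis using B unfolding EY EY2
    by (simp add: field_simps power2_eq_square)
qed

lemma Cb_nonneg: "lam > 0 \<Longrightarrow> mu > 0 \<Longrightarrow> 0 \<le> Cb lam mu"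
  unfolding Cb_def using K_nonneg[of 0] K_nonneg[of 1] K_nonneg[of 2] by simp

theorem corollary1:
  fixes lam mu :: real and xk :: nat and beta_star :: "nat \<Rightarrow> real"
  assumes "lam > 0" and "mu > 0" and "xk \<ge> 1"
    and "\<forall>\<^sub>F B in at_top. beta_star B > 0 \<and>
           (\<forall>beta > 0. MSE lam mu (beta_star B) B \<le> MSE lam mu beta B)"
  shows "beta_star \<in> O(\<lambda>B. real B powr (1/5)) \<and>
         (\<lambda>B. MSE lam mu (beta_star B) B) \<in> O(\<lambda>B. real B powr (-4/5))"
proof -
  have lam: "lam > 0" and mu: "mu > 0" using assms by auto
  define t where "t = target lam mu"
  define m where "m beta = integral\<^sup>L (sample_law lam) (G beta mu)" for beta
  define s where "s beta = integral\<^sup>L (sample_law lam) (\<lambda>x. (G beta mu x)\<^sup>2)" for beta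
  have mse: "MSE lam mu beta B = (m beta - t)\<^sup>2 + (s beta - (m beta)\<^sup>2) / real B"
    if "beta > 0" "B \<ge> 1" for beta B
    unfolding MSE_def m_def s_def t_def
    by (rule mse_decomp[OF sl_prob[OF lam] mean_G(1)[OF lam mu that(1)] second_G(1)[OF lam mu that(1)] that(2)])
  have mse_nonneg: "0 \<le> MSE lam mu beta B" for beta B
    unfolding MSE_def by (intro integral_nonneg_AE AE_I2) simp
  define b0 where "b0 = max 1 (4 * lam)"
  have b01: "b0 \<ge> 1" by (simp add: b0_def)
  define C where "C = Cb lam mu"
  have C0: "0 \<le> C" using Cb_nonneg[OF lam mu] by (simp add: C_def)
  have biasb: "\<bar>m beta - t\<bar> \<le> C / beta\<^sup>2" if "beta \<ge> b0" for beta
  proof -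
    have b1: "beta \<ge> 1" and b4: "beta \<ge> 4 * lam" using that by (auto simp: b0_def)
    have bp: "beta > 0" using b1 by simp
    from bias[OF lam mu b1 b4] show ?thesis unfolding m_def t_def C_def mean_G(2)[OF lam mu bp] .
  qed
  define Cu where "Cu = 2 * lam / mu ^ 4"
  have su: "s beta \<le> Cu * beta" if "beta > 0" for beta
    using s2_upper[OF lam mu that] unfolding s_def Cu_def by (simp add: field_simps)
  have sl: "cL lam mu * beta \<le> s beta" if "beta \<ge> 1" for beta
    using s2_lower[OF lam mu that] unfolding s_def .
  have cL0: "cL lam mu > 0" by (rule cL_pos[OF lam mu])
  define KK where "KK = C\<^sup>2 + Cu"
  define M2 where "M2 = (\<bar>t\<bar> + C)\<^sup>2"
  define C1 where "C1 = max b0 ((KK + M2) / cL lam mu)"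
  have ev: "\<forall>\<^sub>F B in at_top. B \<ge> 1 \<and> real B \<ge> b0 ^ 5" by (intro eventually_conj eventually_ge_at_top)
      (rule eventually_mono[OF eventually_ge_at_top[of "nat \<lceil>b0 ^ 5\<rceil>"]], linarith)
  have main: "\<bar>beta_star B\<bar> \<le> C1 * \<bar>real B powr (1/5)\<bar> \<and> \<bar>MSE lam mu (beta_star B) B\<bar> \<le> KK * \<bar>real B powr (-4/5)\<bar>"
    if B1: "B \<ge> 1" and Bb: "real B \<ge> b0 ^ 5" and bs: "beta_star B > 0"
      and opt: "\<forall>beta > 0. MSE lam mu (beta_star B) B \<le> MSE lam mu beta B" for B
  proof -
    define b where "b = real B powr (1/5)"
    define P where "P = real B powr (-4/5)"
    have Bpos: "real B > 0" using B1 by simp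
    have bpos: "b > 0" using Bpos by (simp add: b_def)
    have P0: "P > 0" using Bpos by (simp add: P_def)
    have bb0: "b \<ge> b0"
    proof -
      have "(b0 ^ 5) powr (1/5) \<le> real B powr (1/5)" using Bb b01 by (intro powr_mono2) auto
      moreover have "(b0 ^ 5) powr (1/5) = b0"
      proof -
        have e5: "b0 powr (real 5) = b0 ^ 5" using b01 by (intro powr_realpow) simp
        have "(b0 ^ 5) powr (1/5) = (b0 powr 5) powr (1/5)" using e5 by simp
        also have "\<dots> = b0" using b01 by (simp only: powr_powr) simp
        finally show ?thesis .
      qed
      ultimately show ?thesis by (simp add: b_def)
    qed
    have b1: "b \<ge> 1" using bb0 b01 by simp
    have b4P: "b ^ 4 * P = 1"
    proof -
      have "b ^ 4 = real B powr (4/5)" unfolding b_def using Bpos by (simp add: powr_power)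
      thus ?thesis unfolding P_def using Bpos by (simp flip: powr_add)
    qed
    have BP: "real B * P = b"
    proof -
      have "real B * P = real B powr 1 * real B powr (-4/5)" using Bpos by (simp add: P_def)
      also have "\<dots> = b" unfolding b_def by (simp only: powr_add[symmetric]) simp
      finally show ?thesis .
    qed
    have mseb: "MSE lam mu b B \<le> KK * P"
    proof -
      have "(m b - t)\<^sup>2 \<le> (C / b\<^sup>2)\<^sup>2"
        using biasb[OF bb0] by (metis abs_ge_zero power2_abs power_mono)
      also have "(C / b\<^sup>2)\<^sup>2 = C\<^sup>2 * P"
      proof -
        have "(C / b\<^sup>2)\<^sup>2 = C\<^sup>2 / b ^ 4" by (simp add: power_divide flip: power_mult)
        also have "\<dots> = C\<^sup>2 * P" using b4P bpos by (simp add: field_simps)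
        finally show ?thesis .
      qed
      finally have T1: "(m b - t)\<^sup>2 \<le> C\<^sup>2 * P" .
      have "(s b - (m b)\<^sup>2) / real B \<le> s b / real B" using Bpos by (intro divide_right_mono) auto
      also have "\<dots> \<le> Cu * b / real B" using su[OF bpos] Bpos by (intro divide_right_mono) auto
      also have "Cu * b / real B = Cu * P" using BP Bpos by (simp add: field_simps)
      finally have T2: "(s b - (m b)\<^sup>2) / real B \<le> Cu * P" .
      show ?thesis unfolding mse[OF bpos B1] KK_def using T1 T2 by (simp add: algebra_simps)
    qed
    have mse_star: "MSE lam mu (beta_star B) B \<le> KK * P"
      using opt bpos mseb by (meson order.trans)
    have part2: "\<bar>MSE lam mu (beta_star B) B\<bar> \<le> KK * \<bar>real B powr (-4/5)\<bar>"
      using mse_star mse_nonneg[of "beta_star B" B] P0 unfolding P_def by simp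
    have KK0: "0 \<le> KK" unfolding KK_def Cu_def using lam mu by simp
    have M20: "0 \<le> M2" unfolding M2_def by simp
    have part1: "beta_star B \<le> C1 * b"
    proof (cases "beta_star B < b0")
      case True
      have "beta_star B \<le> b0 * 1" using True by simp
      also have "\<dots> \<le> C1 * b" unfolding C1_def using b1 b01 by (intro mult_mono) auto
      finally show ?thesis .
    next
      case False
      hence bsb: "beta_star B \<ge> b0" by simp
      hence bs1: "beta_star B \<ge> 1" using b01 by simp
      have "\<bar>m (beta_star B) - t\<bar> \<le> C / (beta_star B)\<^sup>2" by (rule biasb[OF bsb])
      also have "\<dots> \<le> C / 1" using bs1 C0 by (intro divide_left_mono) (auto simp: one_le_power)
      finally have "\<bar>m (beta_star B)\<bar> \<le> \<bar>t\<bar> + C" by simp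
      hence mM: "(m (beta_star B))\<^sup>2 \<le> M2" unfolding M2_def by (metis abs_ge_zero power2_abs power_mono)
      have "(s (beta_star B) - (m (beta_star B))\<^sup>2) / real B \<le> MSE lam mu (beta_star B) B"
        unfolding mse[OF bs B1] by simp
      also have "\<dots> \<le> KK * P" by (rule mse_star)
      finally have "s (beta_star B) - (m (beta_star B))\<^sup>2 \<le> KK * P * real B" using Bpos by (simp add: field_simps)
      also have "KK * P * real B = KK * b" using BP by (simp add: mult_ac)
      finally have "cL lam mu * beta_star B \<le> KK * b + M2" using sl[OF bs1] mM by linarith
      also have "\<dots> \<le> (KK + M2) * b" using mult_left_mono[OF b1 M20] by (simp add: algebra_simps)
      finally have "beta_star B \<le> (KK + M2) / cL lam mu * b" using cL0 by (simp add: field_simps)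
      also have "\<dots> \<le> C1 * b" unfolding C1_def using bpos by (intro mult_right_mono) auto
      finally show ?thesis .
    qed
    show ?thesis using part1 part2 bs bpos unfolding b_def by simp
  qed
  have evall: "\<forall>\<^sub>F B in at_top. \<bar>beta_star B\<bar> \<le> C1 * \<bar>real B powr (1/5)\<bar> \<and> \<bar>MSE lam mu (beta_star B) B\<bar> \<le> KK * \<bar>real B powr (-4/5)\<bar>"
    using eventually_conj[OF ev assms(4)] by (rule eventually_mono) (use main in blast)
  show ?thesis
  proof
    show "beta_star \<in> O(\<lambda>B. real B powr (1/5))"
      by (rule bigoI[where c = C1]) (rule eventually_mono[OF evall], simp)
    show "(\<lambda>B. MSE lam mu (beta_star B) B) \<in> O(\<lambda>B. real B powr (-4/5))"
      by (rule bigoI[where c = KK]) (rule eventually_mono[OF evall], simp)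
  qed
qed


end
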